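(* In the setting of the context, suppose $G_{xy}^{[1]}=1$ and $G_x\cong D_{20}$. Then $G_e\cong D_8$.
   Context: $\mathcal{A}=(G_x,G_e,G_{xy})$ is a finite, primitive amalgam of degree $(5,2)$ (no nontrivial subgroup of $G_{xy}$ normal in both $G_x$ and $G_e$; $|G_x:G_{xy}|=5$, $|G_e:G_{xy}|=2$), $G=G_x*_{G_{xy}}G_e$ acts on the coset graph (5-valent tree) $\Gamma$, $x$ is the vertex with stabiliser $G_x$, $y$ the neighbour with $G_e$ the setwise stabiliser of $\{x,y\}$ and $G_x\cap G_y=G_{xy}$. $G_z^{[1]}$ is the pointwise stabiliser of $z$ and its neighbours, $G_{xy}^{[1]}=G_x^{[1]}\cap G_y^{[1]}$. $D_{2n}$ denotes the dihedral group of order $2n$. *)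

theory Defs
  imports "HOL-Algebra.Algebra"
begin

text \<open>The dihedral group of order 2n: element (i,b) stands for r^i s^b
  (r a rotation of order n, s a reflection, s r s = r^-1).\<close>
definition dihedral :: "nat \<Rightarrow> (nat \<times> bool) monoid" where
  "dihedral n = \<lparr> carrier = {0..<n} \<times> UNIV,
     monoid.mult = (\<lambda>(i, b) (j, c). ((if b then i + n - j else i + j) mod n, b \<noteq> c)),
     one = (0, False) \<rparr>"

definition amalgam :: "'a monoid \<Rightarrow> 'a monoid \<Rightarrow> bool" where
  "amalgam Gx Ge \<longleftrightarrow> group Gx \<and> group Ge \<and>
     subgroup (carrier Gx \<inter> carrier Ge) Gx \<and> subgroup (carrier Gx \<inter> carrier Ge) Ge \<and>
     (\<forall>a \<in> carrier Gx \<inter> carrier Ge. \<forall>b \<in> carrier Gx \<inter> carrier Ge.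
        a \<otimes>\<^bsub>Gx\<^esub> b = a \<otimes>\<^bsub>Ge\<^esub> b)"

definition amalgam_Gxy :: "'a monoid \<Rightarrow> 'a monoid \<Rightarrow> 'a set" where
  "amalgam_Gxy Gx Ge = carrier Gx \<inter> carrier Ge"

definition finite_primitive_amalgam_52 :: "'a monoid \<Rightarrow> 'a monoid \<Rightarrow> bool" where
  "finite_primitive_amalgam_52 Gx Ge \<longleftrightarrow> amalgam Gx Ge \<and>
     finite (carrier Gx) \<and> finite (carrier Ge) \<and>
     card (carrier Gx) = 5 * card (amalgam_Gxy Gx Ge) \<and>
     card (carrier Ge) = 2 * card (amalgam_Gxy Gx Ge) \<and>
     (\<forall>N. N \<subseteq> amalgam_Gxy Gx Ge \<longrightarrow> N \<lhd> Gx \<longrightarrow> N \<lhd> Ge \<longrightarrow> N = {\<one>\<^bsub>Gx\<^esub>})"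

text \<open>G_x^[1]: kernel of G_x on the neighbours of x, i.e. on the cosets of G_xy
  (the core of G_xy in G_x).\<close>
definition Gx_kernel :: "'a monoid \<Rightarrow> 'a monoid \<Rightarrow> 'a set" where
  "Gx_kernel Gx Ge = (\<Inter>g \<in> carrier Gx. g <#\<^bsub>Gx\<^esub> (amalgam_Gxy Gx Ge) #>\<^bsub>Gx\<^esub> inv\<^bsub>Gx\<^esub> g)"

text \<open>G_y^[1] = t G_x^[1] t^-1 for any t in G_e - G_xy (independent of t);
  it lies in G_xy, so it is computed inside G_e.\<close>
definition Gy_kernel :: "'a monoid \<Rightarrow> 'a monoid \<Rightarrow> 'a set" where
  "Gy_kernel Gx Ge = (\<Inter>t \<in> carrier Ge - amalgam_Gxy Gx Ge.
       t <#\<^bsub>Ge\<^esub> (Gx_kernel Gx Ge) #>\<^bsub>Ge\<^esub> inv\<^bsub>Ge\<^esub> t)"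

definition Gxy_kernel :: "'a monoid \<Rightarrow> 'a monoid \<Rightarrow> 'a set" where
  "Gxy_kernel Gx Ge = Gx_kernel Gx Ge \<inter> Gy_kernel Gx Ge"

end

theory Submission
  imports Defs
begin
lemma d_carrier: "y \<in> carrier (dihedral n) \<longleftrightarrow> fst y < n"
  by (cases y) (auto simp: dihedral_def)
lemma d_mult: "(i,b) \<otimes>\<^bsub>dihedral n\<^esub> (j,c) = ((if b then i + n - j else i + j) mod n, b \<noteq> c)"
  by (simp add: dihedral_def)
lemma d_one: "\<one>\<^bsub>dihedral n\<^esub> = (0, False)" by (simp add: dihedral_def)

lemma d10_cases: "(i::nat) < 10 \<Longrightarrow> i = 0 \<or> i = 1 \<or> i = 2 \<or> i = 3 \<or> i = 4 \<or> i = 5 \<or> i = 6 \<or> i = 7 \<or> i = 8 \<or> i = 9" by arith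

lemma d10_idem: "y \<in> carrier (dihedral 10) \<Longrightarrow> y \<otimes>\<^bsub>dihedral 10\<^esub> y = y \<Longrightarrow> y = (0,False)"
proof -
  assume a: "y \<in> carrier (dihedral 10)" "y \<otimes>\<^bsub>dihedral 10\<^esub> y = y"
  obtain i b where y: "y = (i,b)" by (cases y)
  with a have "i < 10" by (simp add: d_carrier)
  then show ?thesis using a unfolding y by (cases b; insert d10_cases[OF \<open>i<10\<close>]; elim disjE; simp add: d_mult)
qed
lemma d10_four: "y \<in> carrier (dihedral 10) \<Longrightarrow>
   ((y \<otimes>\<^bsub>dihedral 10\<^esub> y) \<otimes>\<^bsub>dihedral 10\<^esub> y) \<otimes>\<^bsub>dihedral 10\<^esub> y = (0,False)
   \<Longrightarrow> y \<otimes>\<^bsub>dihedral 10\<^esub> y = (0,False)"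
proof -
  assume a: "y \<in> carrier (dihedral 10)" "((y \<otimes>\<^bsub>dihedral 10\<^esub> y) \<otimes>\<^bsub>dihedral 10\<^esub> y) \<otimes>\<^bsub>dihedral 10\<^esub> y = (0,False)"
  obtain i b where y: "y = (i,b)" by (cases y)
  with a have "i < 10" by (simp add: d_carrier)
  then show ?thesis using a unfolding y by (cases b; insert d10_cases[OF \<open>i<10\<close>]; elim disjE; simp add: d_mult)
qed
lemma d10_central: "y \<in> carrier (dihedral 10) \<Longrightarrow>
   (5,False) \<otimes>\<^bsub>dihedral 10\<^esub> y = y \<otimes>\<^bsub>dihedral 10\<^esub> (5,False)"
proof -
  assume a: "y \<in> carrier (dihedral 10)"
  obtain i b where y: "y = (i,b)" by (cases y)
  with a have "i < 10" by (simp add: d_carrier)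
  then show ?thesis using a unfolding y by (cases b; insert d10_cases[OF \<open>i<10\<close>]; elim disjE; simp add: d_mult)
qed
lemma d10_sub4:
  assumes "H \<subseteq> carrier (dihedral 10)" "card H = 4" "(0,False) \<in> H"
    "\<And>x y. x \<in> H \<Longrightarrow> y \<in> H \<Longrightarrow> x \<otimes>\<^bsub>dihedral 10\<^esub> y \<in> H"
    "\<And>x. x \<in> H \<Longrightarrow> x \<otimes>\<^bsub>dihedral 10\<^esub> x = (0,False)"
  shows "(5,False) \<in> H"
proof (rule ccontr)
  assume n5: "(5,False) \<notin> H"
  have refl: "\<exists>i. x = (i,True) \<and> i < 10" if "x \<in> H" "x \<noteq> (0,False)" for x
  proof -
    obtain i b where y: "x = (i,b)" by (cases x)
    with that assms(1) have "i < 10" by (auto simp add: d_carrier)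
    then show ?thesis using that assms(5)[OF that(1)] n5 unfolding y by (cases b; insert d10_cases[OF \<open>i<10\<close>]; elim disjE; simp add: d_mult)
  qed
  have fin: "finite H" using assms(2) card.infinite by fastforce
  have c3: "card (H - {(0,False)}) = 3" using assms(2,3) fin by (simp add: card_Diff_singleton)
  then obtain a where a: "a \<in> H - {(0,False)}" by (metis card.empty ex_in_conv zero_neq_numeral)
  have "card (H - {(0,False)} - {a}) = 2" using c3 a fin by (simp add: card_Diff_singleton)
  then obtain c where c: "c \<in> H - {(0,False)} - {a}" by (metis card.empty ex_in_conv zero_neq_numeral)
  have ac: "a \<in> H - {(0,False)}" "c \<in> H - {(0,False)}" "a \<noteq> c" using a c by auto
  obtain i where i: "a = (i,True)" "i < 10" using refl ac by blast
  obtain j where j: "c = (j,True)" "j < 10" using refl ac by blast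
  have p: "a \<otimes>\<^bsub>dihedral 10\<^esub> c \<in> H" using assms(4) ac by blast
  have "a \<otimes>\<^bsub>dihedral 10\<^esub> c = ((i + 10 - j) mod 10, False)" using i j by (simp add: d_mult)
  moreover have "i \<noteq> j" using i j ac by auto
  then have "(i + 10 - j) mod 10 \<noteq> 0" using i j by presburger
  ultimately show False using refl[OF p] by auto
qed

lemma iso_sym_gen:
  assumes "h \<in> iso G H" and cl: "\<And>x y. x \<in> carrier G \<Longrightarrow> y \<in> carrier G \<Longrightarrow> x \<otimes>\<^bsub>G\<^esub> y \<in> carrier G"
  shows "H \<cong> G"
proof -
  have h: "h \<in> hom G H" "bij_betw h (carrier G) (carrier H)"
    using assms by (auto simp add: iso_def bij_betw_inv_into)
  then have HG: "bij_betw (inv_into (carrier G) h) (carrier H) (carrier G)"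
    by (simp add: bij_betw_inv_into)
  have *: "\<And>x. x \<in> carrier H \<Longrightarrow> inv_into (carrier G) h x \<in> carrier G"
    by (meson HG bij_betwE)
  have "inv_into (carrier G) h \<in> hom H G"
    unfolding hom_def
  proof safe
    show "\<And>x. x \<in> carrier H \<Longrightarrow> inv_into (carrier G) h x \<in> carrier G" by (rule *)
    show "inv_into (carrier G) h (x \<otimes>\<^bsub>H\<^esub> y) = inv_into (carrier G) h x \<otimes>\<^bsub>G\<^esub> inv_into (carrier G) h y"
      if "x \<in> carrier H" "y \<in> carrier H" for x y
    proof (rule inv_into_f_eq)
      show "inj_on h (carrier G)"
        using bij_betw_def h(2) by blast
      show "inv_into (carrier G) h x \<otimes>\<^bsub>G\<^esub> inv_into (carrier G) h y \<in> carrier G"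
        using cl * that by auto
      show "h (inv_into (carrier G) h x \<otimes>\<^bsub>G\<^esub> inv_into (carrier G) h y) = x \<otimes>\<^bsub>H\<^esub> y"
        using h bij_betw_inv_into_right [of h] unfolding hom_def by (simp add: "*" that)
    qed
  qed
  then have "inv_into (carrier G) h \<in> iso H G"
    by (simp add: Group.iso_def bij_betw_inv_into h)
  then show ?thesis unfolding is_iso_def by auto
qed

lemma d_closed: "x \<in> carrier (dihedral 4) \<Longrightarrow> y \<in> carrier (dihedral 4) \<Longrightarrow> x \<otimes>\<^bsub>dihedral 4\<^esub> y \<in> carrier (dihedral 4)"
  by (cases x; cases y) (simp add: d_carrier d_mult)

lemma mod4_lem: "(j::nat) < 4 \<Longrightarrow> (i + 3 * j) mod 4 = (i + 4 - j) mod 4"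
proof -
  assume "j < 4"
  then have "j = 0 \<or> j = 1 \<or> j = 2 \<or> j = 3" by arith
  moreover have "(i + 6) mod 4 = (i + 2) mod 4"
  proof -
    have "i + 6 = (i + 2) + 4" by simp
    then show ?thesis by (simp only: mod_add_self2)
  qed
  moreover have "(i + 9) mod 4 = (i + 1) mod 4"
  proof -
    have "i + 9 = (i + 1) + 2 * 4" by simp
    then show ?thesis by (simp only: mod_mult_self1)
  qed
  ultimately show ?thesis by (auto simp: add.commute)
qed

lemma (in group) d8_struct:
  assumes sV: "subgroup V G" and cV: "card V = 4" and cG: "card (carrier G) = 8"
    and fG: "finite (carrier G)" and sq: "\<And>x. x \<in> V \<Longrightarrow> x \<otimes> x = \<one>"
    and zV: "z \<in> V" and z1: "z \<noteq> \<one>" and tG: "t \<in> carrier G" and tV: "t \<notin> V"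
    and tz: "t \<otimes> z \<noteq> z \<otimes> t"
  shows "G \<cong> dihedral 4"
proof -
  have VC: "V \<subseteq> carrier G" using sV subgroup.subset by blast
  have zC: "z \<in> carrier G" using zV VC by auto
  have zz: "z \<otimes> z = \<one>" using sq zV by auto
  have invV: "inv x \<in> V" if "x \<in> V" for x by (rule subgroup.m_inv_closed[OF sV that])
  have mV: "x \<otimes> y \<in> V" if "x \<in> V" "y \<in> V" for x y by (rule subgroup.m_closed[OF sV that(1) that(2)])
  have finV: "finite V" using cV card.infinite by fastforce
  have cos: "carrier G = V \<union> (\<lambda>v. g \<otimes> v) ` V" if gC: "g \<in> carrier G" and gV: "g \<notin> V" for g
  proof -
    have disj: "V \<inter> (\<lambda>v. g \<otimes> v) ` V = {}"
    proof (rule ccontr)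
      assume "V \<inter> (\<lambda>v. g \<otimes> v) ` V \<noteq> {}"
      then obtain v where v: "v \<in> V" "g \<otimes> v \<in> V" by auto
      have "g = (g \<otimes> v) \<otimes> inv v" using v VC gC by (auto simp: m_assoc)
      then have "g \<in> V" using mV invV v by metis
      then show False using gV by simp
    qed
    have "inj_on (\<lambda>v. g \<otimes> v) V"
    proof (rule inj_onI)
      fix x y assume "x \<in> V" "y \<in> V" "g \<otimes> x = g \<otimes> y"
      then show "x = y" using l_cancel[of g x y] gC VC by auto
    qed
    then have "card ((\<lambda>v. g \<otimes> v) ` V) = 4" using cV by (simp add: card_image)
    then have "card (V \<union> (\<lambda>v. g \<otimes> v) ` V) = 8" using disj cV finV by (simp add: card_Un_disjoint)
    moreover have "V \<union> (\<lambda>v. g \<otimes> v) ` V \<subseteq> carrier G" using VC gC by auto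
    ultimately show ?thesis using cG fG by (metis card_subset_eq)
  qed
  have rep: "\<exists>v\<in>V. y = g \<otimes> v" if "g \<in> carrier G" "g \<notin> V" "y \<in> carrier G" "y \<notin> V" for g y
    using cos[OF that(1,2)] that(3,4) by auto
  obtain r where rC: "r \<in> carrier G" and rV: "r \<notin> V" and rr1: "r \<otimes> r \<noteq> \<one>" and rz: "r \<otimes> z \<noteq> z \<otimes> r"
  proof (cases "t \<otimes> t = \<one>")
    case False
    then show ?thesis using that tG tV tz by blast
  next
    case True
    have tzC: "t \<otimes> z \<in> carrier G" using tG zC by auto
    have "t \<otimes> z \<notin> V"
    proof
      assume "t \<otimes> z \<in> V"
      moreover have "t = (t \<otimes> z) \<otimes> z" using zz tG zC by (simp add: m_assoc)
      ultimately show False using mV zV tV by metis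
    qed
    moreover have "(t \<otimes> z) \<otimes> (t \<otimes> z) \<noteq> \<one>"
    proof
      assume a: "(t \<otimes> z) \<otimes> (t \<otimes> z) = \<one>"
      have "inv (t \<otimes> z) = t \<otimes> z" using inv_equality[OF a tzC tzC] .
      moreover have "inv t = t" using inv_equality[OF True tG tG] .
      moreover have "inv z = z" using inv_equality[OF zz zC zC] .
      ultimately have "t \<otimes> z = z \<otimes> t" using tG zC by (simp add: inv_mult_group)
      then show False using tz by simp
    qed
    moreover have "(t \<otimes> z) \<otimes> z \<noteq> z \<otimes> (t \<otimes> z)"
    proof
      assume a: "(t \<otimes> z) \<otimes> z = z \<otimes> (t \<otimes> z)"
      have "t = z \<otimes> (t \<otimes> z)" using a zz tG zC by (simp add: m_assoc)
      then have "z \<otimes> t = (z \<otimes> z) \<otimes> (t \<otimes> z)" using tG zC by (simp add: m_assoc)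
      then have "z \<otimes> t = t \<otimes> z" using zz tG zC by simp
      then show False using tz by simp
    qed
    ultimately show ?thesis using that tzC by blast
  qed
  define q where "q = r \<otimes> r"
  have qC: "q \<in> carrier G" using rC q_def by auto
  have qV: "q \<in> V"
  proof (rule ccontr)
    assume "q \<notin> V"
    then obtain v where v: "v \<in> V" "r \<otimes> r = r \<otimes> v" using rep[OF rC rV qC] q_def by auto
    then have "r = v" using rC VC by auto
    then show False using v rV by simp
  qed
  have qq: "q \<otimes> q = \<one>" using sq qV by auto
  have qz: "q \<noteq> z"
  proof
    assume "q = z"
    then have "z = r \<otimes> r" using q_def by simp
    then show False using rz m_assoc[OF rC rC rC] by simp
  qed
  define c where "c = r \<otimes> z \<otimes> inv r"
  have cC: "c \<in> carrier G" using c_def rC zC by auto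
  have cr: "c \<otimes> r = r \<otimes> z" using c_def rC zC by (simp add: m_assoc)
  have cVV: "c \<in> V"
  proof (rule ccontr)
    assume "c \<notin> V"
    then obtain v where v: "v \<in> V" "c = r \<otimes> v" using rep[OF rC rV cC] by auto
    then have "r \<otimes> (z \<otimes> inv r) = r \<otimes> v" using c_def rC zC by (simp add: m_assoc)
    then have "z \<otimes> inv r = v" using rC zC VC v by auto
    then have "inv r = z \<otimes> v" using zz rC zC by (metis inv_closed l_one m_assoc)
    then have "inv r \<in> V" using mV zV v by simp
    then have "inv (inv r) \<in> V" using invV by blast
    then show False using rV rC by simp
  qed
  have c1: "c \<noteq> \<one>"
  proof
    assume "c = \<one>"
    then have "r \<otimes> z = r" using cr rC by simp
    then have "r \<otimes> z = r \<otimes> \<one>" using rC by simp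
    then show False using z1 rC zC by simp
  qed
  have cz: "c \<noteq> z" using cr rz by auto
  have cq: "c \<noteq> q"
  proof
    assume "c = q"
    then have "r \<otimes> z = r \<otimes> q" using cr q_def rC by (simp add: m_assoc)
    then show False using qz rC zC qC by simp
  qed
  have Veq: "V = {\<one>, z, q, z \<otimes> q}"
  proof -
    have sub: "{\<one>, z, q, z \<otimes> q} \<subseteq> V" using zV qV mV sV subgroup.one_closed by blast
    have "z \<otimes> q \<noteq> \<one>"
    proof
      assume zq1: "z \<otimes> q = \<one>"
      have "q = (z \<otimes> z) \<otimes> q" using zz qC by simp
      also have "\<dots> = z \<otimes> (z \<otimes> q)" using zC qC by (simp add: m_assoc)
      also have "\<dots> = z" using zq1 zC by simp
      finally have "q = z" .
      then show False using qz by simp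
    qed
    moreover have "z \<otimes> q \<noteq> z" using qV rr1 q_def zC qC
      by (metis r_one l_cancel one_closed)
    moreover have "z \<otimes> q \<noteq> q" using z1 zC qC by (metis l_one r_cancel one_closed)
    moreover have "q \<noteq> \<one>" using rr1 q_def by simp
    ultimately have "card {\<one>, z, q, z \<otimes> q} = 4" using z1 qz by auto
    then show ?thesis using sub cV finV by (metis card_subset_eq)
  qed
  have czq: "c = z \<otimes> q" using cVV Veq c1 cz cq by auto
  have rz2: "r \<otimes> z = z \<otimes> q \<otimes> r" using cr czq by simp
  have zr: "z \<otimes> r = q \<otimes> r \<otimes> z"
  proof -
    have "z \<otimes> (r \<otimes> z) = (z \<otimes> z) \<otimes> (q \<otimes> r)" using rz2 zC qC rC by (simp add: m_assoc)
    then have "z \<otimes> (r \<otimes> z) = q \<otimes> r" using zz qC rC by simp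
    then have "(z \<otimes> (r \<otimes> z)) \<otimes> z = q \<otimes> r \<otimes> z" by simp
    then show ?thesis using zz zC rC by (simp add: m_assoc)
  qed
  have p0: "r [^] (0::nat) = \<one>" by simp
  have p1: "r [^] (1::nat) = r" using rC by simp
  have p2: "r [^] (2::nat) = q" using rC q_def by (simp add: numeral_eq_Suc)
  have p3: "r [^] (3::nat) = r \<otimes> q" using rC q_def by (simp add: numeral_eq_Suc m_assoc)
  have p3': "r [^] (3::nat) = q \<otimes> r" using rC q_def by (simp add: numeral_eq_Suc)
  have p4: "r [^] (4::nat) = \<one>"
  proof -
    have "r [^] (4::nat) = r [^] (2::nat) \<otimes> r [^] (2::nat)" using rC nat_pow_mult[of r 2 2] by simp
    then show ?thesis using p2 qq by simp
  qed
  have pmod: "r [^] n = r [^] (n mod 4)" for n :: nat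
  proof -
    have "r [^] n = r [^] (n mod 4 + 4 * (n div 4))" by simp
    also have "\<dots> = r [^] (n mod 4) \<otimes> r [^] (4 * (n div 4))"
      using nat_pow_mult[OF rC, of "n mod 4" "4 * (n div 4)"] by simp
    also have "\<dots> = r [^] (n mod 4) \<otimes> (r [^] (4::nat)) [^] (n div 4)"
      using nat_pow_pow[OF rC, of 4 "n div 4"] by simp
    also have "\<dots> = r [^] (n mod 4)" using p4 rC by simp
    finally show ?thesis .
  qed
  have pmul: "r [^] i \<otimes> r [^] j = r [^] ((i + j) mod 4)" for i j :: nat
    using rC pmod[of "i+j"] by (simp add: nat_pow_mult)
  have zp: "z \<otimes> r [^] j = r [^] (3 * j) \<otimes> z" for j :: nat
  proof (induction j)
    case 0
    then show ?case using zC by simp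
  next
    case (Suc j)
    have "z \<otimes> r [^] (Suc j) = (z \<otimes> r [^] j) \<otimes> r" using zC rC by (simp add: m_assoc)
    also have "\<dots> = r [^] (3 * j) \<otimes> (z \<otimes> r)" using Suc zC rC by (simp add: m_assoc)
    also have "\<dots> = (r [^] (3 * j) \<otimes> r [^] (3::nat)) \<otimes> z" using zr p3' zC rC qC by (simp add: m_assoc)
    also have "\<dots> = r [^] (3 * Suc j) \<otimes> z" using rC by (simp add: nat_pow_mult add.commute)
    finally show ?case .
  qed
  have zq: "z \<otimes> q = q \<otimes> z"
  proof -
    have "z \<otimes> r [^] (2::nat) = r [^] (6::nat) \<otimes> z" using zp[of 2] by simp
    also have "r [^] (6::nat) = r [^] (2::nat)" using pmod[of 6] by simp
    finally show ?thesis using p2 by simp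
  qed
  define e where "e = (\<lambda>b. if b then z else \<one>)"
  have eC: "e b \<in> carrier G" for b using zC e_def by simp
  define psi where "psi = (\<lambda>x::nat \<times> bool. r [^] (fst x) \<otimes> e (snd x))"
  have psiC: "psi x \<in> carrier G" for x using rC eC psi_def by simp
  have hom: "psi (x \<otimes>\<^bsub>dihedral 4\<^esub> y) = psi x \<otimes> psi y"
    if "x \<in> carrier (dihedral 4)" "y \<in> carrier (dihedral 4)" for x y
  proof -
    obtain i b j c where xy: "x = (i, b)" "y = (j, c)" by (cases x; cases y)
    have j4: "j < 4" using that xy by (simp add: d_carrier)
    show ?thesis
    proof (cases b)
      case False
      have "psi x \<otimes> psi y = (r [^] i \<otimes> r [^] j) \<otimes> e c"
        using xy False rC eC by (simp add: psi_def e_def m_assoc)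
      also have "\<dots> = psi (x \<otimes>\<^bsub>dihedral 4\<^esub> y)"
        using xy False by (simp add: psi_def d_mult pmul e_def)
      finally show ?thesis by simp
    next
      case True
      have "psi x \<otimes> psi y = r [^] i \<otimes> ((z \<otimes> r [^] j) \<otimes> e c)"
        using xy True rC eC zC by (simp add: psi_def e_def m_assoc)
      also have "\<dots> = (r [^] i \<otimes> r [^] (3 * j)) \<otimes> (z \<otimes> e c)"
        using zp rC eC zC by (simp add: m_assoc)
      also have "\<dots> = r [^] ((i + 4 - j) mod 4) \<otimes> e (\<not> c)"
        using pmul mod4_lem[OF j4] zz zC by (simp add: e_def)
      also have "\<dots> = psi (x \<otimes>\<^bsub>dihedral 4\<^esub> y)"
        using xy True by (simp add: psi_def d_mult)
      finally show ?thesis by simp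
    qed
  qed
  have cD: "carrier (dihedral 4) = {0..<4} \<times> UNIV" by (simp add: dihedral_def)
  have cD8: "card (carrier (dihedral 4)) = 8" using cD by (simp add: card_cartesian_product)
  have img: "psi ` carrier (dihedral 4) = carrier G"
  proof
    show "psi ` carrier (dihedral 4) \<subseteq> carrier G" using psiC by auto
    have vals: "psi (0, False) = \<one>" "psi (0, True) = z" "psi (2, False) = q" "psi (2, True) = z \<otimes> q"
      "psi (1, False) = r" "psi (1, True) = r \<otimes> z" "psi (3, False) = r \<otimes> q" "psi (3, True) = r \<otimes> (z \<otimes> q)"
      using p0 p1 p2 p3 zq zC rC qC by (simp_all add: psi_def e_def m_assoc)
    have ins: "(0, b) \<in> carrier (dihedral 4)" "(1, b) \<in> carrier (dihedral 4)"
      "(2, b) \<in> carrier (dihedral 4)" "(3, b) \<in> carrier (dihedral 4)" for b using cD by simp_all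
    show "carrier G \<subseteq> psi ` carrier (dihedral 4)"
    proof
      fix y assume yC: "y \<in> carrier G"
      show "y \<in> psi ` carrier (dihedral 4)"
      proof (cases "y \<in> V")
        case True
        then have "y = psi (0, False) \<or> y = psi (0, True) \<or> y = psi (2, False) \<or> y = psi (2, True)"
          using Veq vals by auto
        then show ?thesis using ins by blast
      next
        case False
        then obtain v where v: "v \<in> V" "y = r \<otimes> v" using rep[OF rC rV yC] by auto
        then have "y = psi (1, False) \<or> y = psi (1, True) \<or> y = psi (3, False) \<or> y = psi (3, True)"
          using Veq vals rC by auto
        then show ?thesis using ins by blast
      qed
    qed
  qed
  have finD: "finite (carrier (dihedral 4))" using cD by simp
  have "inj_on psi (carrier (dihedral 4))"
    by (intro eq_card_imp_inj_on finD) (simp add: img cD8 cG)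
  then have "psi \<in> iso (dihedral 4) G"
    using img hom psiC unfolding iso_def hom_def bij_betw_def by (auto simp: Pi_def)
  then show ?thesis by (rule iso_sym_gen) (rule d_closed)
qed

theorem mainTheorem6:
  fixes Gx Ge :: "'a monoid"
  assumes "finite_primitive_amalgam_52 Gx Ge"
    and "Gxy_kernel Gx Ge = {\<one>\<^bsub>Gx\<^esub>}"
    and "Gx \<cong> dihedral 10"
  shows "Ge \<cong> dihedral 4"
proof -
  define V where "V = amalgam_Gxy Gx Ge"
  let ?D = "dihedral 10"
  have am: "amalgam Gx Ge" and cx: "card (carrier Gx) = 5 * card V" and ce: "card (carrier Ge) = 2 * card V"
    and fine: "finite (carrier Ge)"
    using assms(1) unfolding finite_primitive_amalgam_52_def V_def by auto
  have gx: "group Gx" and ge: "group Ge" and sx: "subgroup V Gx" and se: "subgroup V Ge"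
    and agree: "\<And>a b. a \<in> V \<Longrightarrow> b \<in> V \<Longrightarrow> a \<otimes>\<^bsub>Gx\<^esub> b = a \<otimes>\<^bsub>Ge\<^esub> b"
    using am unfolding amalgam_def amalgam_Gxy_def V_def by auto
  interpret X: group Gx by (rule gx)
  interpret E: group Ge by (rule ge)
  have VX: "V \<subseteq> carrier Gx" and VE: "V \<subseteq> carrier Ge" unfolding V_def amalgam_Gxy_def by auto
  obtain \<phi> where phi: "\<phi> \<in> iso Gx ?D" using assms(3) unfolding is_iso_def by auto
  have phom: "\<phi> \<in> hom Gx ?D" and pbij: "bij_betw \<phi> (carrier Gx) (carrier ?D)"
    using phi by (auto simp: iso_def)
  have "card (carrier ?D) = 20" by (simp add: dihedral_def card_cartesian_product)
  then have "card (carrier Gx) = 20" using bij_betw_same_card[OF pbij] by simp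
  then have cV: "card V = 4" using cx by simp
  then have cGe: "card (carrier Ge) = 8" using ce by simp
  have pmult: "\<And>a b. a \<in> carrier Gx \<Longrightarrow> b \<in> carrier Gx \<Longrightarrow> \<phi> (a \<otimes>\<^bsub>Gx\<^esub> b) = \<phi> a \<otimes>\<^bsub>?D\<^esub> \<phi> b"
    using phom by (simp add: hom_mult)
  have pcar: "\<And>a. a \<in> carrier Gx \<Longrightarrow> \<phi> a \<in> carrier ?D" using phom by (simp add: hom_in_carrier)
  have pinj: "inj_on \<phi> (carrier Gx)" using pbij bij_betw_def by blast
  have p1: "\<phi> \<one>\<^bsub>Gx\<^esub> = (0,False)"
    using d10_idem[OF pcar[OF X.one_closed]] pmult[OF X.one_closed X.one_closed] by simp
  have sqX: "x \<otimes>\<^bsub>Gx\<^esub> x = \<one>\<^bsub>Gx\<^esub>" if xV: "x \<in> V" for x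
  proof -
    interpret S: group "Gx\<lparr>carrier := V\<rparr>" by (rule subgroup.subgroup_is_group[OF sx gx])
    have xX: "x \<in> carrier Gx" using xV VX by auto
    have "x [^]\<^bsub>Gx\<lparr>carrier := V\<rparr>\<^esub> order (Gx\<lparr>carrier := V\<rparr>) = \<one>\<^bsub>Gx\<lparr>carrier := V\<rparr>\<^esub>"
      using S.pow_order_eq_1[of x] xV by simp
    then have x4: "((x \<otimes>\<^bsub>Gx\<^esub> x) \<otimes>\<^bsub>Gx\<^esub> x) \<otimes>\<^bsub>Gx\<^esub> x = \<one>\<^bsub>Gx\<^esub>"
      using cV xX by (simp add: order_def numeral_eq_Suc)
    have "\<phi> (((x \<otimes>\<^bsub>Gx\<^esub> x) \<otimes>\<^bsub>Gx\<^esub> x) \<otimes>\<^bsub>Gx\<^esub> x) = ((\<phi> x \<otimes>\<^bsub>?D\<^esub> \<phi> x) \<otimes>\<^bsub>?D\<^esub> \<phi> x) \<otimes>\<^bsub>?D\<^esub> \<phi> x"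
      using xX by (simp add: pmult)
    then have "\<phi> x \<otimes>\<^bsub>?D\<^esub> \<phi> x = (0,False)" using d10_four[OF pcar[OF xX]] x4 p1 by simp
    then have "\<phi> (x \<otimes>\<^bsub>Gx\<^esub> x) = \<phi> \<one>\<^bsub>Gx\<^esub>" using xX p1 by (simp add: pmult)
    then show ?thesis using pinj xX by (simp add: inj_on_eq_iff)
  qed
  have H5: "(5,False) \<in> \<phi> ` V"
  proof (rule d10_sub4)
    show "\<phi> ` V \<subseteq> carrier ?D" using pcar VX by auto
    show "card (\<phi> ` V) = 4" using cV card_image inj_on_subset[OF pinj VX] by metis
    show "(0,False) \<in> \<phi> ` V" using p1 subgroup.one_closed[OF sx] by force
    show "x \<otimes>\<^bsub>?D\<^esub> y \<in> \<phi> ` V" if xa: "x \<in> \<phi> ` V" and ya: "y \<in> \<phi> ` V" for x y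
    proof -
      obtain a where a: "a \<in> V" "x = \<phi> a" using xa by blast
      obtain b where b: "b \<in> V" "y = \<phi> b" using ya by blast
      have ab: "a \<in> V" "b \<in> V" "x = \<phi> a" "y = \<phi> b" using a b by auto
      have abX: "a \<in> carrier Gx" "b \<in> carrier Gx" using ab VX by auto
      have "x \<otimes>\<^bsub>?D\<^esub> y = \<phi> (a \<otimes>\<^bsub>Gx\<^esub> b)" using pmult[OF abX] ab by simp
      moreover have "a \<otimes>\<^bsub>Gx\<^esub> b \<in> V" by (rule subgroup.m_closed[OF sx ab(1) ab(2)])
      ultimately show ?thesis by auto
    qed
    show "x \<otimes>\<^bsub>?D\<^esub> x = (0,False)" if xa: "x \<in> \<phi> ` V" for x
    proof -
      obtain a where a: "a \<in> V" "x = \<phi> a" using xa by blast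
      have aX: "a \<in> carrier Gx" using a VX by auto
      have "x \<otimes>\<^bsub>?D\<^esub> x = \<phi> (a \<otimes>\<^bsub>Gx\<^esub> a)" using pmult[OF aX aX] a by simp
      then show ?thesis using sqX[OF a(1)] p1 by simp
    qed
  qed
  then obtain z where zV: "z \<in> V" and pz: "\<phi> z = (5,False)" by auto
  have zX: "z \<in> carrier Gx" using zV VX by auto
  have z1: "z \<noteq> \<one>\<^bsub>Gx\<^esub>" using pz p1 by auto
  have central: "g \<otimes>\<^bsub>Gx\<^esub> z = z \<otimes>\<^bsub>Gx\<^esub> g" if gC: "g \<in> carrier Gx" for g
  proof -
    have "\<phi> (g \<otimes>\<^bsub>Gx\<^esub> z) = \<phi> (z \<otimes>\<^bsub>Gx\<^esub> g)"
      using pmult[OF gC zX] pmult[OF zX gC] pz d10_central[OF pcar[OF gC]] by simp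
    then show ?thesis using pinj gC zX by (simp add: inj_on_eq_iff)
  qed
  have zK: "z \<in> Gx_kernel Gx Ge"
    unfolding Gx_kernel_def V_def[symmetric]
  proof (rule INT_I)
    fix g assume gC: "g \<in> carrier Gx"
    have "(g \<otimes>\<^bsub>Gx\<^esub> z) \<otimes>\<^bsub>Gx\<^esub> inv\<^bsub>Gx\<^esub> g = (z \<otimes>\<^bsub>Gx\<^esub> g) \<otimes>\<^bsub>Gx\<^esub> inv\<^bsub>Gx\<^esub> g"
      using central[OF gC] by simp
    also have "\<dots> = z" using gC zX by (simp add: X.m_assoc)
    finally have eq: "z = (g \<otimes>\<^bsub>Gx\<^esub> z) \<otimes>\<^bsub>Gx\<^esub> inv\<^bsub>Gx\<^esub> g" by simp
    show "z \<in> g <#\<^bsub>Gx\<^esub> V #>\<^bsub>Gx\<^esub> inv\<^bsub>Gx\<^esub> g"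
      unfolding l_coset_def r_coset_def using zV eq by blast
  qed
  have "z \<notin> Gy_kernel Gx Ge"
  proof
    assume "z \<in> Gy_kernel Gx Ge"
    then have "z \<in> Gxy_kernel Gx Ge" using zK unfolding Gxy_kernel_def by auto
    then show False using assms(2) z1 by auto
  qed
  then obtain t where tC: "t \<in> carrier Ge" and tV: "t \<notin> V"
    and tn: "z \<notin> t <#\<^bsub>Ge\<^esub> (Gx_kernel Gx Ge) #>\<^bsub>Ge\<^esub> inv\<^bsub>Ge\<^esub> t"
    unfolding Gy_kernel_def V_def by auto
  have zE: "z \<in> carrier Ge" using zV VE by auto
  have tz: "t \<otimes>\<^bsub>Ge\<^esub> z \<noteq> z \<otimes>\<^bsub>Ge\<^esub> t"
  proof
    assume a: "t \<otimes>\<^bsub>Ge\<^esub> z = z \<otimes>\<^bsub>Ge\<^esub> t"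
    have "(t \<otimes>\<^bsub>Ge\<^esub> z) \<otimes>\<^bsub>Ge\<^esub> inv\<^bsub>Ge\<^esub> t = (z \<otimes>\<^bsub>Ge\<^esub> t) \<otimes>\<^bsub>Ge\<^esub> inv\<^bsub>Ge\<^esub> t"
      using a by simp
    also have "\<dots> = z" using tC zE by (simp add: E.m_assoc)
    finally have "z = (t \<otimes>\<^bsub>Ge\<^esub> z) \<otimes>\<^bsub>Ge\<^esub> inv\<^bsub>Ge\<^esub> t" by simp
    then have "z \<in> t <#\<^bsub>Ge\<^esub> (Gx_kernel Gx Ge) #>\<^bsub>Ge\<^esub> inv\<^bsub>Ge\<^esub> t"
      unfolding l_coset_def r_coset_def using zK by blast
    then show False using tn by simp
  qed
  have one_eq: "\<one>\<^bsub>Gx\<^esub> = \<one>\<^bsub>Ge\<^esub>"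
  proof -
    have oV: "\<one>\<^bsub>Gx\<^esub> \<in> V" using subgroup.one_closed[OF sx] by simp
    then have oE: "\<one>\<^bsub>Gx\<^esub> \<in> carrier Ge" using VE by auto
    have "\<one>\<^bsub>Gx\<^esub> \<otimes>\<^bsub>Ge\<^esub> \<one>\<^bsub>Gx\<^esub> = \<one>\<^bsub>Gx\<^esub> \<otimes>\<^bsub>Gx\<^esub> \<one>\<^bsub>Gx\<^esub>" using agree[OF oV oV] by simp
    also have "\<dots> = \<one>\<^bsub>Gx\<^esub> \<otimes>\<^bsub>Ge\<^esub> \<one>\<^bsub>Ge\<^esub>" using oE by simp
    finally have eqn: "\<one>\<^bsub>Gx\<^esub> \<otimes>\<^bsub>Ge\<^esub> \<one>\<^bsub>Gx\<^esub> = \<one>\<^bsub>Gx\<^esub> \<otimes>\<^bsub>Ge\<^esub> \<one>\<^bsub>Ge\<^esub>" .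
    show ?thesis by (rule E.l_cancel[OF eqn oE E.one_closed oE])
  qed
  have sqE: "x \<otimes>\<^bsub>Ge\<^esub> x = \<one>\<^bsub>Ge\<^esub>" if "x \<in> V" for x
    using sqX[OF that] agree[OF that that] one_eq by simp
  have zE1: "z \<noteq> \<one>\<^bsub>Ge\<^esub>" using z1 one_eq by simp
  show ?thesis by (rule E.d8_struct[OF se cV cGe fine sqE zV zE1 tC tV tz])
qed

end
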